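(* Let $\mathcal{H}$ be an $n$-dimensional (real or complex) Hilbert space, let $F=\{f_i\}_{i=1}^N$ be a frame for $\mathcal{H}$ with frame operator $S_F$, and let $\{q_i\}_{i=1}^N$ be the weight number sequence associated with a probability sequence $\{p_i\}_{i=1}^N$. Let $l=\max_{1\le i\le N}\{q_i\|S_F^{-1/2}f_i\|^2+q_i\|f_i\|\,\|S_F^{-1}f_i\|\}$, $\Lambda_1=\{i: q_i\|S_F^{-1/2}f_i\|^2+q_i\|f_i\|\,\|S_F^{-1}f_i\|=l\}$, $\Lambda_2=\{1,\dots,N\}\setminus\Lambda_1$, and $H_j=\operatorname{span}\{f_i:i\in\Lambda_j\}$ for $j=1,2$. If $H_1\cap H_2=\{0\}$ and $\{f_i\}_{i\in\Lambda_1}$ is linearly independent, then $S_F^{-1}F\in\Delta_F^{(1)}$. Moreover, if in addition $N>n$, then $S_F^{-1}F$ is not the unique 1-erasure PASOD-frame of $F$.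
   Context: A finite sequence $F=\{f_i\}_{i=1}^N$ in $\mathcal{H}$ is a frame if there are $A,B>0$ with $A\|f\|^2\le\sum_{i=1}^N|\langle f,f_i\rangle|^2\le B\|f\|^2$ for all $f$. The frame operator is $S_Ff=\sum_{i=1}^N\langle f,f_i\rangle f_i$ (positive invertible) and the canonical dual is $S_F^{-1}F=\{S_F^{-1}f_i\}_{i=1}^N$. A frame $G=\{g_i\}_{i=1}^N$ is a dual of $F$ if $f=\sum_i\langle f,f_i\rangle g_i=\sum_i\langle f,g_i\rangle f_i$ for all $f$. A probability sequence is $\{p_i\}_{i=1}^N$ with $0\le p_i\le1$, $\sum p_i=1$; weight numbers $q_i=\frac{\sum_{j} p_j}{\sum_{j} p_j-p_i}\cdot\frac{N-1}{n}$. For $\Lambda\subseteq\{1,\dots,N\}$ the error operator is $E_{\Lambda,(F,G)}f=\sum_{i\in\Lambda}q_i\langle f,f_i\rangle g_i$. Set $\mathcal{A}_P^{(1)}(F,G)=\max_{|\Lambda|=1}\frac{\|E_{\Lambda,(F,G)}\|+\rho(E_{\Lambda,(F,G)})}{2}$ (operator norm and spectral radius). $\Delta_F^{(1)}$ is the set of duals $G$ of $F$ minimizing $\mathcal{A}_P^{(1)}(F,\cdot)$ over all duals of $F$ (1-erasure PASOD-frames of $F$). *)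

theory Defs
  imports "HOL-Analysis.Analysis"
begin

text \<open>The Hilbert space H is modelled as 'k^'n with 'k = complex (cj = cnj) or
'k = real (cj = id); n = CARD('n). Inner product linear in the first argument.
Frames are indexed by {1..N}.\<close>

definition ip :: "('k::field \<Rightarrow> 'k) \<Rightarrow> 'k^'n::finite \<Rightarrow> 'k^'n \<Rightarrow> 'k" where
  "ip cj x y = (\<Sum>i\<in>UNIV. x$i * cj (y$i))"

definition is_frame :: "('k::real_normed_field \<Rightarrow> 'k) \<Rightarrow> nat \<Rightarrow> (nat \<Rightarrow> 'k^'n::finite) \<Rightarrow> bool" where
  "is_frame cj N F \<longleftrightarrow> (\<exists>A B. 0 < A \<and> 0 < B \<and>
     (\<forall>f. A * (norm f)^2 \<le> (\<Sum>i=1..N. (norm (ip cj f (F i)))^2) \<and>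
          (\<Sum>i=1..N. (norm (ip cj f (F i)))^2) \<le> B * (norm f)^2))"

definition frame_op :: "('k::field \<Rightarrow> 'k) \<Rightarrow> nat \<Rightarrow> (nat \<Rightarrow> 'k^'n::finite) \<Rightarrow> 'k^'n \<Rightarrow> 'k^'n" where
  "frame_op cj N F = (\<lambda>f. \<Sum>i=1..N. ip cj f (F i) *s F i)"

definition klinear :: "('k::field^'n::finite \<Rightarrow> 'k^'n) \<Rightarrow> bool" where
  "klinear T \<longleftrightarrow> (\<forall>x y. T (x + y) = T x + T y) \<and> (\<forall>c x. T (c *s x) = c *s T x)"

definition positive_op :: "('k::real_normed_field \<Rightarrow> 'k) \<Rightarrow> ('k^'n::finite \<Rightarrow> 'k^'n) \<Rightarrow> bool" where
  "positive_op cj T \<longleftrightarrow> klinear T \<and> (\<forall>x y. ip cj (T x) y = ip cj x (T y)) \<and>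
     (\<forall>x. \<exists>r\<ge>0. ip cj (T x) x = of_real r)"

definition op_sqrt :: "('k::real_normed_field \<Rightarrow> 'k) \<Rightarrow> ('k^'n::finite \<Rightarrow> 'k^'n) \<Rightarrow> ('k^'n \<Rightarrow> 'k^'n)" where
  "op_sqrt cj T = (THE R. positive_op cj R \<and> R \<circ> R = T)"

definition canonical_dual :: "('k::field \<Rightarrow> 'k) \<Rightarrow> nat \<Rightarrow> (nat \<Rightarrow> 'k^'n::finite) \<Rightarrow> nat \<Rightarrow> 'k^'n" where
  "canonical_dual cj N F = (\<lambda>i. inv (frame_op cj N F) (F i))"

definition is_dual :: "('k::real_normed_field \<Rightarrow> 'k) \<Rightarrow> nat \<Rightarrow> (nat \<Rightarrow> 'k^'n::finite) \<Rightarrow> (nat \<Rightarrow> 'k^'n) \<Rightarrow> bool" where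
  "is_dual cj N F G \<longleftrightarrow> is_frame cj N G \<and>
     (\<forall>f. f = (\<Sum>i=1..N. ip cj f (F i) *s G i) \<and> f = (\<Sum>i=1..N. ip cj f (G i) *s F i))"

definition prob_seq :: "nat \<Rightarrow> (nat \<Rightarrow> real) \<Rightarrow> bool" where
  "prob_seq N p \<longleftrightarrow> (\<forall>i\<in>{1..N}. 0 \<le> p i \<and> p i \<le> 1) \<and> (\<Sum>i=1..N. p i) = 1"

definition weight_num :: "nat \<Rightarrow> nat \<Rightarrow> (nat \<Rightarrow> real) \<Rightarrow> nat \<Rightarrow> real" where
  "weight_num N n p i = (\<Sum>j=1..N. p j) / ((\<Sum>j=1..N. p j) - p i) * ((real N - 1) / real n)"

definition error_op :: "('k::real_normed_field \<Rightarrow> 'k) \<Rightarrow> (nat \<Rightarrow> real) \<Rightarrow> (nat \<Rightarrow> 'k^'n::finite)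
    \<Rightarrow> (nat \<Rightarrow> 'k^'n) \<Rightarrow> nat set \<Rightarrow> 'k^'n \<Rightarrow> 'k^'n" where
  "error_op cj q F G \<Lambda> = (\<lambda>f. \<Sum>i\<in>\<Lambda>. (of_real (q i) * ip cj f (F i)) *s G i)"

definition is_eigenvalue :: "('k::field^'n::finite \<Rightarrow> 'k^'n) \<Rightarrow> 'k \<Rightarrow> bool" where
  "is_eigenvalue T c \<longleftrightarrow> (\<exists>v. v \<noteq> 0 \<and> T v = c *s v)"

definition spec_radius :: "('k::real_normed_field^'n::finite \<Rightarrow> 'k^'n) \<Rightarrow> real" where
  "spec_radius T = (let E = {norm c | c. is_eigenvalue T c} in if E = {} then 0 else Sup E)"

definition A1 :: "('k::real_normed_field \<Rightarrow> 'k) \<Rightarrow> nat \<Rightarrow> (nat \<Rightarrow> real) \<Rightarrow> (nat \<Rightarrow> 'k^'n::finite)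
    \<Rightarrow> (nat \<Rightarrow> 'k^'n) \<Rightarrow> real" where
  "A1 cj N p F G = Max ((\<lambda>i. (onorm (error_op cj (weight_num N CARD('n) p) F G {i})
        + spec_radius (error_op cj (weight_num N CARD('n) p) F G {i})) / 2) ` {1..N})"

definition pasod1 :: "('k::real_normed_field \<Rightarrow> 'k) \<Rightarrow> nat \<Rightarrow> (nat \<Rightarrow> real) \<Rightarrow> (nat \<Rightarrow> 'k^'n::finite)
    \<Rightarrow> (nat \<Rightarrow> 'k^'n) set" where
  "pasod1 cj N p F = {G. is_dual cj N F G \<and> (\<forall>G'. is_dual cj N F G' \<longrightarrow> A1 cj N p F G \<le> A1 cj N p F G')}"

definition crit :: "('k::real_normed_field \<Rightarrow> 'k) \<Rightarrow> nat \<Rightarrow> (nat \<Rightarrow> real) \<Rightarrow> (nat \<Rightarrow> 'k^'n::finite) \<Rightarrow> nat \<Rightarrow> real" where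
  "crit cj N p F i = (let q = weight_num N CARD('n) p; Si = inv (frame_op cj N F) in
     q i * (norm (op_sqrt cj Si (F i)))^2 + q i * norm (F i) * norm (Si (F i)))"

definition lmax :: "('k::real_normed_field \<Rightarrow> 'k) \<Rightarrow> nat \<Rightarrow> (nat \<Rightarrow> real) \<Rightarrow> (nat \<Rightarrow> 'k^'n::finite) \<Rightarrow> real" where
  "lmax cj N p F = Max (crit cj N p F ` {1..N})"

definition Lambda1 :: "('k::real_normed_field \<Rightarrow> 'k) \<Rightarrow> nat \<Rightarrow> (nat \<Rightarrow> real) \<Rightarrow> (nat \<Rightarrow> 'k^'n::finite) \<Rightarrow> nat set" where
  "Lambda1 cj N p F = {i\<in>{1..N}. crit cj N p F i = lmax cj N p F}"

definition kspan_fam :: "nat set \<Rightarrow> (nat \<Rightarrow> 'k::field^'n::finite) \<Rightarrow> ('k^'n) set" where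
  "kspan_fam \<Lambda> F = {x. \<exists>c. x = (\<Sum>i\<in>\<Lambda>. c i *s F i)}"

definition lin_indep_fam :: "nat set \<Rightarrow> (nat \<Rightarrow> 'k::field^'n::finite) \<Rightarrow> bool" where
  "lin_indep_fam \<Lambda> F \<longleftrightarrow> (\<forall>c. (\<Sum>i\<in>\<Lambda>. c i *s F i) = 0 \<longrightarrow> (\<forall>i\<in>\<Lambda>. c i = 0))"

end

theory Submission
  imports Defs
begin

lemma norm_smult_vec: "norm (c *s (x::'k::real_normed_field^'n)) = norm c * norm x"
proof -
  have "norm (c *s x) = L2_set (\<lambda>i. norm c * norm (x$i)) UNIV"
    by (simp add: norm_vec_def norm_mult)
  also have "\<dots> = norm c * norm x"
    by (simp add: norm_vec_def L2_set_right_distrib)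
  finally show ?thesis .
qed

locale cjl =
  fixes cj :: "'k::{real_normed_field,euclidean_space} \<Rightarrow> 'k" and re :: "'k \<Rightarrow> real"
  assumes cj_add: "cj (a + b) = cj a + cj b"
  and cj_mult: "cj (a * b) = cj a * cj b"
  and cj_cj: "cj (cj a) = a"
  and cj_of_real: "cj (of_real r) = of_real r"
  and mult_cj: "a * cj a = of_real ((norm a)^2)"
  and norm_cj: "norm (cj a) = norm a"
  and re_inner: "re (a * cj b) = inner a b"
  and re_add: "re (a + b) = re a + re b"
  and re_scale: "re (of_real r * a) = r * re a"
  and re_of_real: "re (of_real r) = r"
  and real_cj: "cj a = a \<Longrightarrow> a = of_real (re a)"
begin

lemma cj_zero[simp]: "cj 0 = 0" using cj_of_real[of 0] by simp
lemma cj_one[simp]: "cj 1 = 1" using cj_of_real[of 1] by simp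
lemma re_zero[simp]: "re 0 = 0" using re_of_real[of 0] by simp
lemma cj_minus: "cj (- a) = - cj a"
  by (metis add.right_inverse cj_add cj_zero minus_unique)
lemma cj_diff: "cj (a - b) = cj a - cj b"
  using cj_add[of a "-b"] cj_minus by simp
lemma cj_sum: "cj (sum f A) = sum (\<lambda>i. cj (f i)) A"
  by (induction A rule: infinite_finite_induct) (auto simp: cj_add)
lemma re_sum: "re (sum f A) = sum (\<lambda>i. re (f i)) A"
  by (induction A rule: infinite_finite_induct) (auto simp: re_add)
lemma re_minus: "re (- a) = - re a"
  using re_add[of a "-a"] by simp
lemma re_diff: "re (a - b) = re a - re b"
  using re_add[of a "-b"] re_minus by simp
lemma re_le: "re a \<le> norm a"
proof -
  have "re a = re (a * cj 1)" by simp
  also have "\<dots> = inner a 1" by (rule re_inner)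
  also have "\<dots> \<le> norm a * norm (1::'k)" by (rule norm_cauchy_schwarz)
  finally show ?thesis by simp
qed

lemma ip_add_left: "ip cj (x + y) z = ip cj x z + ip cj y z"
  by (simp add: ip_def distrib_right sum.distrib)
lemma ip_add_right: "ip cj x (y + z) = ip cj x y + ip cj x z"
  by (simp add: ip_def cj_add distrib_left sum.distrib)
lemma ip_scale_left: "ip cj (c *s x) y = c * ip cj x y"
  by (simp add: ip_def sum_distrib_left mult.assoc)
lemma ip_scale_right: "ip cj x (c *s y) = cj c * ip cj x y"
  by (simp add: ip_def sum_distrib_left cj_mult mult_ac)
lemma ip_zero_left[simp]: "ip cj 0 y = 0" by (simp add: ip_def)
lemma ip_zero_right[simp]: "ip cj x 0 = 0" by (simp add: ip_def)
lemma ip_minus_left: "ip cj (- x) y = - ip cj x y"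
  by (simp add: ip_def sum_negf)
lemma ip_minus_right: "ip cj x (- y) = - ip cj x y"
  by (simp add: ip_def sum_negf cj_minus)
lemma ip_diff_left: "ip cj (x - y) z = ip cj x z - ip cj y z"
  using ip_add_left[of x "-y" z] ip_minus_left by simp
lemma ip_diff_right: "ip cj x (y - z) = ip cj x y - ip cj x z"
  using ip_add_right[of x y "-z"] ip_minus_right by simp
lemma ip_sum_left: "ip cj (sum f A) y = (\<Sum>i\<in>A. ip cj (f i) y)"
  by (induction A rule: infinite_finite_induct) (auto simp: ip_add_left)
lemma ip_sum_right: "ip cj x (sum f A) = (\<Sum>i\<in>A. ip cj x (f i))"
  by (induction A rule: infinite_finite_induct) (auto simp: ip_add_right)
lemma ip_swap: "cj (ip cj x y) = ip cj y x"
  by (simp add: ip_def cj_sum cj_mult cj_cj mult.commute)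
lemma ip_self: "ip cj x x = of_real ((norm x)^2)"
proof -
  have "ip cj x x = (\<Sum>i\<in>UNIV. of_real ((norm (x$i))^2))"
    by (simp add: ip_def mult_cj)
  also have "\<dots> = of_real (\<Sum>i\<in>UNIV. (norm (x$i))^2)" by simp
  also have "(\<Sum>i\<in>UNIV. (norm (x$i))^2) = (norm x)^2"
    by (simp add: norm_vec_def L2_set_def sum_nonneg)
  finally show ?thesis .
qed
lemma re_ip: "re (ip cj x y) = inner x y"
  by (simp add: ip_def re_sum re_inner inner_vec_def)

lemma norm_ip: "norm (ip cj x y) \<le> norm x * norm y"
proof (cases "ip cj x y = 0")
  case True then show ?thesis by simp
next
  case False
  define a where "a = ip cj x y"
  define u where "u = cj a / of_real (norm a)"
  have na: "norm a > 0" using False a_def by simp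
  have nu: "norm u = 1" using na by (simp add: u_def norm_divide norm_cj)
  have "ip cj (u *s x) y = of_real (norm a)"
  proof -
    have "ip cj (u *s x) y = cj a * a / of_real (norm a)"
      by (simp add: ip_scale_left u_def a_def)
    also have "cj a * a = of_real ((norm a)^2)" by (metis mult.commute mult_cj)
    finally show ?thesis using na by (simp add: power2_eq_square)
  qed
  then have "norm a = re (ip cj (u *s x) y)" by (simp add: re_of_real)
  also have "\<dots> = inner (u *s x) y" by (rule re_ip)
  also have "\<dots> \<le> norm (u *s x) * norm y" by (rule norm_cauchy_schwarz)
  also have "\<dots> = norm x * norm y" by (simp add: norm_smult_vec nu)
  finally show ?thesis by (simp add: a_def)
qed

lemma ip_eq_zero_iff: "ip cj x x = 0 \<longleftrightarrow> x = 0"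
  by (simp add: ip_self)

lemma vec_eqI_ip: "(\<And>z. ip cj x z = ip cj y z) \<Longrightarrow> x = y"
  by (metis ip_diff_left ip_eq_zero_iff right_minus_eq)

end


lemma smult_sum: "(c::'k::field) *s sum f A = (\<Sum>i\<in>A. c *s f i)"
  by (auto simp: vec_eq_iff sum_component sum_distrib_left)

lemma scaleR_vec_smult: "r *\<^sub>R (x::'k::real_normed_field^'n) = (of_real r :: 'k) *s x"
  by (simp add: vec_eq_iff scaleR_conv_of_real[where 'a='k])

lemma klinear_0: "klinear T \<Longrightarrow> T 0 = 0"
  unfolding klinear_def by (metis vector_smult_lzero)
lemma klinear_add: "klinear T \<Longrightarrow> T (x + y) = T x + T y" unfolding klinear_def by blast
lemma klinear_smult: "klinear T \<Longrightarrow> T (c *s x) = c *s T x" unfolding klinear_def by blast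
lemma klinear_minus: "klinear T \<Longrightarrow> T (- x) = - T x"
  using klinear_smult[of T "-1" x] by simp
lemma klinear_diff: "klinear T \<Longrightarrow> T (x - y) = T x - T y"
  using klinear_add[of T x "-y"] klinear_minus[of T y] by simp
lemma klinear_sum: "klinear T \<Longrightarrow> T (sum f A) = (\<Sum>i\<in>A. T (f i))"
  by (induction A rule: infinite_finite_induct) (auto simp: klinear_0 klinear_add)
lemma klinear_linear: "klinear (T::'k::real_normed_field^'n \<Rightarrow> _) \<Longrightarrow> linear T"
  by (rule linearI) (auto simp: klinear_add klinear_smult scaleR_vec_smult)
lemma klinear_bl: "klinear (T::'k::{real_normed_field,euclidean_space}^'n \<Rightarrow> _) \<Longrightarrow> bounded_linear T"
  using klinear_linear linear_conv_bounded_linear by blast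
lemma klinear_vlinear: "klinear T \<Longrightarrow> Vector_Spaces.linear (*s) (*s) T"
  unfolding Vector_Spaces.linear_def module_hom_def module_hom_axioms_def
  by (auto simp: klinear_add klinear_smult vec.module_axioms vec.vector_space_axioms)

context cjl begin

definition sa :: "('k^'n::finite \<Rightarrow> 'k^'n) \<Rightarrow> bool" where
  "sa T \<longleftrightarrow> (\<forall>x y. ip cj (T x) y = ip cj x (T y))"

lemma bl_cj: "bounded_linear cj"
  by (rule linear_conv_bounded_linear[THEN iffD1], rule linearI)
     (auto simp: cj_add scaleR_conv_of_real cj_mult cj_of_real)
lemma bl_re: "bounded_linear re"
  by (rule linear_conv_bounded_linear[THEN iffD1], rule linearI)
     (auto simp: re_add scaleR_conv_of_real re_scale)

lemma cont_ip: "klinear T \<Longrightarrow> continuous_on S (\<lambda>x. ip cj (T x) (x::'k^'n::finite))"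
proof -
  assume T: "klinear T"
  have cT: "continuous_on S T" using klinear_bl[OF T] linear_continuous_on by blast
  have cc: "continuous_on S (\<lambda>x. cj (x $ i))" for i
    by (rule linear_continuous_on, rule bounded_linear_compose[OF bl_cj bounded_linear_vec_nth])
  show ?thesis unfolding ip_def
    by (intro continuous_on_sum continuous_on_mult continuous_on_component cT cc)
qed

lemma cont_ip_const: "continuous_on S (\<lambda>x. ip cj (x::'k^'n::finite) e)"
  unfolding ip_def by (intro continuous_intros)

lemma sa_real: "sa T \<Longrightarrow> ip cj (T x) x = of_real (re (ip cj (T x) x))"
  by (rule real_cj) (simp add: ip_swap sa_def)

lemma form_zero:
  fixes B :: "'k^'n::finite \<Rightarrow> 'k^'n"
  assumes B: "klinear B" "sa B"
    and pos: "\<And>t::real. re (ip cj (B (v - of_real t *s B v)) (v - of_real t *s B v)) \<ge> 0"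
    and z: "ip cj (B v) v = 0"
  shows "B v = 0"
proof -
  define w where "w = B v"
  define c where "c = (norm w)^2"
  define r where "r = re (ip cj (B w) w)"
  have e1: "ip cj (B v) w = of_real c" by (simp add: w_def c_def ip_self)
  have e2: "ip cj (B w) v = of_real c"
    using B(2) by (simp add: sa_def w_def c_def ip_self)
  have e3: "ip cj (B w) w = of_real r" unfolding r_def by (rule sa_real[OF B(2)])
  have key: "0 \<le> t * t * r - 2 * t * c" for t
  proof -
    have h1: "B (v - of_real t *s w) = w - of_real t *s B w"
      by (simp add: klinear_diff[OF B(1)] klinear_smult[OF B(1)] w_def)
    have "ip cj (w - of_real t *s B w) (v - of_real t *s w) =
      ip cj w v - ip cj (of_real t *s B w) v - (ip cj w (of_real t *s w) - ip cj (of_real t *s B w) (of_real t *s w))"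
      by (simp only: ip_diff_left ip_diff_right)
    also have "\<dots> = 0 - of_real t * of_real c - (of_real t * of_real c - of_real t * (of_real t * of_real r))"
      unfolding ip_scale_left ip_scale_right cj_of_real using z e1 e2 e3 unfolding w_def by simp
    also have "\<dots> = of_real (t * t * r - 2 * t * c)"
      by (simp add: algebra_simps)
    finally have eq: "ip cj (B (v - of_real t *s w)) (v - of_real t *s w)
        = of_real (t * t * r - 2 * t * c)" by (simp only: h1)
    have "re (ip cj (B (v - of_real t *s w)) (v - of_real t *s w)) = t * t * r - 2 * t * c"
      by (simp only: eq re_of_real)
    moreover have "0 \<le> re (ip cj (B (v - of_real t *s w)) (v - of_real t *s w))"
      using pos[of t] by (simp only: w_def)
    ultimately show ?thesis by linarith
  qed
  have "c = 0"
  proof (rule ccontr)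
    assume "c \<noteq> 0"
    then have cp: "c > 0" by (simp add: c_def)
    define t where "t = c / (\<bar>r\<bar> + 1)"
    have tp: "t > 0" using cp by (simp add: t_def)
    have "t * r \<le> t * \<bar>r\<bar>" using tp by (simp add: mult_left_mono)
    also have "t * \<bar>r\<bar> = c * (\<bar>r\<bar> / (\<bar>r\<bar> + 1))" by (simp add: t_def)
    also have "\<dots> < c * 1"
      by (rule mult_strict_left_mono[OF _ cp]) simp
    finally have "t * r < c" by simp
    then have "t * (t * r) < t * c" using tp by (rule mult_strict_left_mono)
    then have "t * t * r < 2 * t * c" using tp cp by (simp add: mult.assoc)
    with key[of t] show False by simp
  qed
  then show ?thesis by (simp add: c_def w_def)
qed

definition eigW :: "('k^'n::finite) set \<Rightarrow> ('k^'n) set" where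
  "eigW E = {x. \<forall>e\<in>E. ip cj x e = 0}"

lemma quad_scale: "klinear T \<Longrightarrow> re (ip cj (T (of_real c *s x)) (of_real c *s x)) = c^2 * re (ip cj (T x) x)"
  by (simp add: klinear_smult ip_scale_left ip_scale_right cj_of_real re_scale power2_eq_square mult.assoc)

lemma eig_exists:
  fixes T :: "'k^'n::finite \<Rightarrow> 'k^'n"
  assumes T: "klinear T" "sa T"
    and E: "\<forall>e\<in>E. \<exists>r. T e = of_real r *s e"
    and u: "u \<in> eigW E" "u \<noteq> 0"
  shows "\<exists>v M. v \<in> eigW E \<and> norm v = 1 \<and> T v = of_real M *s v \<and>
     (\<forall>x\<in>eigW E. re (ip cj (T x) x) \<le> M * (norm x)^2)"
proof -
  define K where "K = sphere 0 1 \<inter> (\<Inter>e\<in>E. {x. ip cj x e = 0})"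
  have Kc: "compact K" unfolding K_def
    by (intro compact_Int_closed compact_sphere closed_INT ballI closed_Collect_eq cont_ip_const)
      (auto intro: continuous_intros)
  have WK: "x \<in> K \<longleftrightarrow> x \<in> eigW E \<and> norm x = 1" for x
    by (auto simp: K_def eigW_def)
  have Wsc: "x \<in> eigW E \<Longrightarrow> c *s x \<in> eigW E" for x c
    by (simp add: eigW_def ip_scale_left)
  have "(of_real (1 / norm u)) *s u \<in> K" using u by (simp add: WK Wsc norm_smult_vec norm_divide)
  then have Kne: "K \<noteq> {}" by blast
  have ccK: "continuous_on K (\<lambda>x. re (ip cj (T x) x))"
    by (rule continuous_on_compose2[OF linear_continuous_on[OF bl_re] cont_ip[OF T(1)]]) auto
  obtain v where v: "v \<in> K" and vmax: "\<forall>y\<in>K. re (ip cj (T y) y) \<le> re (ip cj (T v) v)"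
    using continuous_attains_sup[OF Kc Kne ccK] by blast
  define M where "M = re (ip cj (T v) v)"
  have bnd: "re (ip cj (T x) x) \<le> M * (norm x)^2" if x: "x \<in> eigW E" for x
  proof (cases "x = 0")
    case True then show ?thesis by (simp add: klinear_0[OF T(1)])
  next
    case False
    define y where "y = of_real (1 / norm x) *s x"
    have "y \<in> K" using x False by (simp add: WK Wsc y_def norm_smult_vec norm_divide)
    then have "re (ip cj (T y) y) \<le> M" using vmax M_def by blast
    moreover have "re (ip cj (T y) y) = re (ip cj (T x) x) / (norm x)^2"
      unfolding y_def quad_scale[OF T(1)] by (simp add: power_divide)
    ultimately show ?thesis using False by (simp add: divide_le_eq mult.commute)
  qed
  define B where "B = (\<lambda>x. of_real M *s x - T x)"
  have Bl: "klinear B" using T(1) unfolding klinear_def B_def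
    by (auto simp: vector_add_ldistrib vector_ssub_ldistrib vector_smult_assoc mult.commute)
  have Bs: "sa B" using T(2) unfolding sa_def B_def
    by (simp add: ip_diff_left ip_diff_right ip_scale_left ip_scale_right cj_of_real)
  have BW: "B x \<in> eigW E" if "x \<in> eigW E" for x
  proof -
    have "ip cj (T x) e = 0" if e: "e \<in> E" for e
    proof -
      obtain r where "T e = of_real r *s e" using E e by blast
      then show ?thesis using T(2) \<open>x \<in> eigW E\<close> e
        by (simp add: sa_def ip_scale_right eigW_def)
    qed
    then show ?thesis using that by (simp add: B_def eigW_def ip_diff_left ip_scale_left)
  qed
  have Wdiff: "x \<in> eigW E \<Longrightarrow> y \<in> eigW E \<Longrightarrow> x - y \<in> eigW E" for x y
    by (simp add: eigW_def ip_diff_left)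
  have vW: "v \<in> eigW E" and vn: "norm v = 1" using v WK by auto
  have Bq: "re (ip cj (B y) y) = M * (norm y)^2 - re (ip cj (T y) y)" for y
  proof -
    have "ip cj (B y) y = of_real M * of_real ((norm y)^2) - ip cj (T y) y"
      by (simp only: B_def ip_diff_left ip_scale_left ip_self)
    then show ?thesis by (simp only: re_diff re_scale re_of_real)
  qed
  have "B v = 0"
  proof (rule form_zero[OF Bl Bs])
    fix t :: real
    have xin: "v - of_real t *s B v \<in> eigW E" using vW BW Wsc Wdiff by blast
    have "re (ip cj (T (v - of_real t *s B v)) (v - of_real t *s B v))
          \<le> M * (norm (v - of_real t *s B v))^2" by (rule bnd[OF xin])
    then show "0 \<le> re (ip cj (B (v - of_real t *s B v)) (v - of_real t *s B v))"
      unfolding Bq by simp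
  next
    have "ip cj (T v) v = of_real M" unfolding M_def by (rule sa_real[OF T(2)])
    then show "ip cj (B v) v = 0" using vn by (simp add: B_def ip_diff_left ip_scale_left ip_self)
  qed
  then have "T v = of_real M *s v" by (simp add: B_def)
  then show ?thesis using vW vn bnd by blast
qed

end


context cjl begin

definition orthonormal :: "('k^'n::finite) set \<Rightarrow> bool" where
  "orthonormal E \<longleftrightarrow> (\<forall>e\<in>E. \<forall>e'\<in>E. ip cj e e' = (if e = e' then 1 else 0))"

lemma ortho_coef:
  assumes "finite E" "orthonormal E" "e \<in> E"
  shows "ip cj (\<Sum>v\<in>E. a v *s v) e = a e"
proof -
  have "ip cj (\<Sum>v\<in>E. a v *s v) e = (\<Sum>v\<in>E. a v * ip cj v e)"
    by (simp add: ip_sum_left ip_scale_left)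
  also have "\<dots> = (\<Sum>v\<in>E. if v = e then a v else 0)"
    by (rule sum.cong) (use assms in \<open>auto simp: orthonormal_def\<close>)
  also have "\<dots> = a e" using assms by simp
  finally show ?thesis .
qed

lemma ortho_card:
  assumes "finite E" "orthonormal (E::('k^'n::finite) set)"
  shows "card E \<le> CARD('n)"
proof -
  have "vec.independent E"
    unfolding vec.independent_explicit
  proof (intro conjI allI impI ballI)
    fix c v assume "(\<Sum>v\<in>E. c v *s v) = 0" "v \<in> E"
    then show "c v = 0" using ortho_coef[OF assms \<open>v \<in> E\<close>, of c] by simp
  qed (rule assms(1))
  then have "card E \<le> vec.dim E" using vec.independent_bound_general by blast
  also have "\<dots> \<le> vec.dim (UNIV :: ('k^'n) set)" by (rule vec.dim_subset) simp
  also have "\<dots> = CARD('n)" by (simp add: card_cart_basis)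
  finally show ?thesis .
qed

lemma spectral:
  fixes T :: "'k^'n::finite \<Rightarrow> 'k^'n"
  assumes T: "klinear T" "sa T"
  shows "\<exists>E lam. finite E \<and> orthonormal E \<and> (\<forall>e\<in>E. T e = of_real (lam e) *s e) \<and>
     (\<forall>x. x = (\<Sum>e\<in>E. ip cj x e *s e))"
proof -
  define P where "P E \<longleftrightarrow> finite E \<and> orthonormal E \<and> (\<forall>e\<in>E. \<exists>r. T e = of_real r *s e)" for E
  have P0: "\<exists>E. P E \<and> card E = 0" by (rule exI[of _ "{}"]) (simp add: P_def orthonormal_def)
  have bound: "\<forall>k. (\<exists>E. P E \<and> card E = k) \<longrightarrow> k \<le> CARD('n)"
    using ortho_card unfolding P_def by blast
  obtain k where k1: "\<exists>E. P E \<and> card E = k" and k2: "\<forall>k'. (\<exists>E. P E \<and> card E = k') \<longrightarrow> k' \<le> k"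
    using Nat.ex_has_greatest_nat[OF P0 bound] by blast
  obtain E where PE: "P E" and cE: "card E = k" using k1 by blast
  have Emax: "card E' \<le> card E" if "P E'" for E'
    using k2 that cE by blast
  have fE: "finite E" and oE: "orthonormal E" and eE: "\<forall>e\<in>E. \<exists>r. T e = of_real r *s e"
    using PE by (auto simp: P_def)
  have exp: "x = (\<Sum>e\<in>E. ip cj x e *s e)" for x
  proof (rule ccontr)
    assume ne: "x \<noteq> (\<Sum>e\<in>E. ip cj x e *s e)"
    define y where "y = x - (\<Sum>e\<in>E. ip cj x e *s e)"
    have yW: "y \<in> eigW E"
      unfolding eigW_def y_def using ortho_coef[OF fE oE] by (simp add: ip_diff_left)
    have "y \<noteq> 0" using ne by (simp add: y_def)
    then obtain v M where v: "v \<in> eigW E" "norm v = 1" "T v = of_real M *s v"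
      using eig_exists[OF T eE yW] by blast
    have vv: "ip cj v v = 1" using v(2) by (simp add: ip_self)
    have vE: "v \<notin> E" using v(1) vv by (auto simp: eigW_def)
    have "P (insert v E)"
      unfolding P_def orthonormal_def
    proof (intro conjI ballI)
      show "finite (insert v E)" using fE by simp
    next
      fix e e' assume "e \<in> insert v E" "e' \<in> insert v E"
      moreover have "ip cj v e = 0" "ip cj e v = 0" if "e \<in> E" for e
        using v(1) that ip_swap[of v e] by (auto simp: eigW_def)
      ultimately show "ip cj e e' = (if e = e' then 1 else 0)"
        using oE vv vE unfolding orthonormal_def by auto
    next
      fix e assume "e \<in> insert v E"
      then show "\<exists>r. T e = of_real r *s e" using v(3) eE by auto
    qed
    then have "card (insert v E) \<le> card E" by (rule Emax)
    then show False using vE fE by simp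
  qed
  from eE obtain lam where "\<forall>e\<in>E. T e = of_real (lam e) *s e" by metis
  then show ?thesis using fE oE exp by blast
qed

end


context cjl begin

lemma pos_kl: "positive_op cj T \<Longrightarrow> klinear T" by (simp add: positive_op_def)
lemma pos_sa: "positive_op cj T \<Longrightarrow> sa T" by (simp add: positive_op_def sa_def)
lemma pos_form: "positive_op cj T \<Longrightarrow> \<exists>r\<ge>0. ip cj (T x) x = of_real r" unfolding positive_op_def by blast

lemma sqrt_exists:
  fixes T :: "'k^'n::finite \<Rightarrow> 'k^'n"
  assumes P: "positive_op cj T"
  shows "\<exists>R. positive_op cj R \<and> R \<circ> R = T"
proof -
  obtain E lam where fE: "finite E" and oE: "orthonormal E"
    and eig: "\<forall>e\<in>E. T e = of_real (lam e) *s e" and exp: "\<forall>x. x = (\<Sum>e\<in>E. ip cj x e *s e)"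
    using spectral[OF pos_kl[OF P] pos_sa[OF P]] by blast
  have ee: "ip cj e e = 1" if "e \<in> E" for e using oE that by (simp add: orthonormal_def)
  have lam0: "lam e \<ge> 0" if e: "e \<in> E" for e
  proof -
    obtain r where r: "r \<ge> 0" "ip cj (T e) e = of_real r" using pos_form[OF P] by blast
    have "ip cj (T e) e = of_real (lam e)" using eig e ee by (simp add: ip_scale_left)
    with r show ?thesis by simp
  qed
  define s where "s e = (of_real (sqrt (lam e)) :: 'k)" for e
  define R where "R x = (\<Sum>e\<in>E. (s e * ip cj x e) *s e)" for x
  have kl: "klinear R"
    unfolding klinear_def
  proof (intro conjI allI)
    fix x y show "R (x + y) = R x + R y"
      by (simp add: R_def ip_add_left distrib_left vector_sadd_rdistrib sum.distrib)
  next
    fix c x show "R (c *s x) = c *s R x"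
      by (simp add: R_def ip_scale_left smult_sum vector_smult_assoc mult_ac)
  qed
  have cjs: "cj (s e) = s e" for e by (simp add: s_def cj_of_real)
  have saR: "ip cj (R x) y = ip cj x (R y)" for x y
  proof -
    have "ip cj (R x) y = (\<Sum>e\<in>E. s e * ip cj x e * ip cj e y)"
      by (simp add: R_def ip_sum_left ip_scale_left)
    also have "\<dots> = (\<Sum>e\<in>E. cj (s e * ip cj y e) * ip cj x e)"
      by (rule sum.cong) (simp_all add: cj_mult cjs ip_swap mult_ac)
    also have "\<dots> = ip cj x (R y)"
      by (simp add: R_def ip_sum_right ip_scale_right)
    finally show ?thesis .
  qed
  have formR: "\<exists>r\<ge>0. ip cj (R x) x = of_real r" for x
  proof -
    have "ip cj (R x) x = (\<Sum>e\<in>E. s e * (ip cj x e * cj (ip cj x e)))"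
      by (simp add: R_def ip_sum_left ip_scale_left ip_swap mult_ac)
    also have "\<dots> = of_real (\<Sum>e\<in>E. sqrt (lam e) * (norm (ip cj x e))^2)"
      by (simp add: mult_cj s_def)
    finally show ?thesis using lam0 by (intro exI[of _ "\<Sum>e\<in>E. sqrt (lam e) * (norm (ip cj x e))^2"])
      (auto intro!: sum_nonneg)
  qed
  have RR: "R (R x) = T x" for x
  proof -
    have c: "ip cj (R x) e = s e * ip cj x e" if "e \<in> E" for e
      unfolding R_def by (rule ortho_coef[OF fE oE that])
    have ss: "s e * s e = of_real (lam e)" if "e \<in> E" for e
      using lam0[OF that] by (simp add: s_def flip: of_real_mult)
    have "R (R x) = (\<Sum>e\<in>E. (of_real (lam e) * ip cj x e) *s e)"
      unfolding R_def[of "R x"] by (rule sum.cong) (simp_all add: c ss mult.assoc[symmetric])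
    also have "\<dots> = T (\<Sum>e\<in>E. ip cj x e *s e)"
      by (simp add: klinear_sum[OF pos_kl[OF P]] klinear_smult[OF pos_kl[OF P]] eig
          vector_smult_assoc mult.commute)
    also have "\<dots> = T x" using exp by metis
    finally show ?thesis .
  qed
  have "positive_op cj R" unfolding positive_op_def using kl saR formR by blast
  moreover have "R \<circ> R = T" using RR by (simp add: fun_eq_iff)
  ultimately show ?thesis by blast
qed


lemma pos_zero:
  assumes P: "positive_op cj R" and z: "ip cj (R v) v = 0"
  shows "R v = 0"
proof (rule form_zero[OF pos_kl[OF P] pos_sa[OF P] _ z])
  fix t :: real
  obtain r where "r \<ge> 0" "ip cj (R (v - of_real t *s R v)) (v - of_real t *s R v) = of_real r"
    using pos_form[OF P] by blast
  then show "0 \<le> re (ip cj (R (v - of_real t *s R v)) (v - of_real t *s R v))"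
    by (simp add: re_of_real)
qed

lemma eigW_empty: "eigW {} = UNIV" by (simp add: eigW_def)

lemma sqrt_unique:
  fixes R1 R2 :: "'k^'n::finite \<Rightarrow> 'k^'n"
  assumes P1: "positive_op cj R1" and P2: "positive_op cj R2" and eq: "R1 \<circ> R1 = R2 \<circ> R2"
  shows "R1 = R2"
proof -
  define D where "D x = R1 x - R2 x" for x
  have k1: "klinear R1" and k2: "klinear R2" using P1 P2 by (simp_all add: pos_kl)
  have kD: "klinear D" using k1 k2 unfolding klinear_def D_def
    by (auto simp: vector_ssub_ldistrib)
  have sD: "sa D" using pos_sa[OF P1] pos_sa[OF P2] unfolding sa_def D_def
    by (simp add: ip_diff_left ip_diff_right)
  have eq': "R1 (R1 x) = R2 (R2 x)" for x using eq by (metis comp_apply)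
  have l0: "l = 0" if v: "D v = of_real l *s v" "v \<noteq> 0" for v l
  proof (rule ccontr)
    assume l: "l \<noteq> 0"
    obtain r1 where r1: "r1 \<ge> 0" "ip cj (R1 v) v = of_real r1" using pos_form[OF P1] by blast
    obtain r2 where r2: "r2 \<ge> 0" "ip cj (R2 v) v = of_real r2" using pos_form[OF P2] by blast
    have "R1 (R1 v) - R2 (R2 v) = R1 (D v) + D (R2 v)"
      by (simp add: D_def klinear_diff[OF k1])
    then have "0 = ip cj (R1 (D v) + D (R2 v)) v" using eq'[of v] by simp
    also have "\<dots> = ip cj (R1 (D v)) v + ip cj (R2 v) (D v)"
      using sD by (simp add: ip_add_left sa_def)
    also have "\<dots> = of_real l * ip cj (R1 v) v + cj (of_real l) * ip cj (R2 v) v"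
      by (simp add: v(1) klinear_smult[OF k1] ip_scale_left ip_scale_right)
    also have "\<dots> = of_real (l * (r1 + r2))"
      by (simp add: r1 r2 cj_of_real distrib_left)
    finally have "r1 + r2 = 0" using l by (simp flip: of_real_add)
    then have "r1 = 0" "r2 = 0" using r1 r2 by linarith+
    then have "R1 v = 0" "R2 v = 0" using pos_zero[OF P1] pos_zero[OF P2] r1 r2 by auto
    then have "of_real l *s v = 0" using v(1) by (simp add: D_def)
    then show False using l v(2) by (simp add: vec_eq_iff)
  qed
  have u: "axis undefined 1 \<in> eigW {}" "axis undefined (1::'k) \<noteq> 0"
    by (simp_all add: eigW_empty axis_eq_0_iff)
  obtain v1 M1 where v1: "norm v1 = 1" "D v1 = of_real M1 *s v1"
    and b1: "\<forall>x. re (ip cj (D x) x) \<le> M1 * (norm x)^2"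
    using eig_exists[OF kD sD _ u] by (auto simp: eigW_empty)
  have "v1 \<noteq> 0" using v1(1) by (metis norm_zero zero_neq_one)
  then have M1: "M1 = 0" using l0[OF v1(2)] by blast
  define D' where "D' x = - D x" for x
  have kD': "klinear D'" using kD unfolding klinear_def D'_def by auto
  have sD': "sa D'" using sD unfolding sa_def D'_def by (simp add: ip_minus_left ip_minus_right)
  obtain v2 M2 where v2: "norm v2 = 1" "D' v2 = of_real M2 *s v2"
    and b2: "\<forall>x. re (ip cj (D' x) x) \<le> M2 * (norm x)^2"
    using eig_exists[OF kD' sD' _ u] by (auto simp: eigW_empty)
  have "D v2 = of_real (- M2) *s v2" using v2(2) by (simp add: D'_def vec_eq_iff) (metis minus_equation_iff)
  moreover have "v2 \<noteq> 0" using v2(1) by (metis norm_zero zero_neq_one)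
  ultimately have M2: "M2 = 0" using l0 by fastforce
  have z: "re (ip cj (D x) x) = 0" for x
    using b1[rule_format, of x] b2[rule_format, of x] M1 M2
    by (simp add: D'_def ip_minus_left re_minus)
  have "D x = 0" for x
  proof (rule form_zero[OF kD sD])
    fix t :: real show "0 \<le> re (ip cj (D (x - of_real t *s D x)) (x - of_real t *s D x))"
      by (simp add: z)
  next
    show "ip cj (D x) x = 0" using sa_real[OF sD, of x] z by simp
  qed
  then show ?thesis by (simp add: fun_eq_iff D_def)
qed

lemma op_sqrt_pos:
  assumes P: "positive_op cj (T::'k^'n::finite \<Rightarrow> 'k^'n)"
  shows "positive_op cj (op_sqrt cj T) \<and> op_sqrt cj T \<circ> op_sqrt cj T = T"
proof -
  have "\<exists>!R. positive_op cj R \<and> R \<circ> R = T"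
    using sqrt_exists[OF P] sqrt_unique by blast
  then show ?thesis unfolding op_sqrt_def by (rule theI')
qed

lemma norm_sqrt:
  assumes P: "positive_op cj (T::'k^'n::finite \<Rightarrow> 'k^'n)"
  shows "of_real ((norm (op_sqrt cj T x))^2) = ip cj (T x) x"
proof -
  have R: "positive_op cj (op_sqrt cj T)" and RR: "op_sqrt cj T \<circ> op_sqrt cj T = T"
    using op_sqrt_pos[OF P] by auto
  have "of_real ((norm (op_sqrt cj T x))^2) = ip cj (op_sqrt cj T x) (op_sqrt cj T x)"
    by (simp add: ip_self)
  also have "\<dots> = ip cj (op_sqrt cj T (op_sqrt cj T x)) x"
    using pos_sa[OF R] by (simp add: sa_def)
  also have "\<dots> = ip cj (T x) x" using RR by (metis comp_apply)
  finally show ?thesis .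
qed

end


context cjl begin

lemma S_kl: "klinear (frame_op cj N F)"
  unfolding klinear_def frame_op_def
  by (simp add: ip_add_left ip_scale_left vector_sadd_rdistrib sum.distrib smult_sum vector_smult_assoc)

lemma S_sa: "sa (frame_op cj N F)"
  unfolding sa_def frame_op_def
  by (simp add: ip_sum_left ip_sum_right ip_scale_left ip_scale_right ip_swap mult.commute)

lemma S_form: "ip cj (frame_op cj N F x) x = of_real (\<Sum>i=1..N. (norm (ip cj x (F i)))^2)"
proof -
  have "ip cj (frame_op cj N F x) x = (\<Sum>i=1..N. ip cj x (F i) * ip cj (F i) x)"
    unfolding frame_op_def by (simp add: ip_sum_left ip_scale_left)
  also have "\<dots> = (\<Sum>i=1..N. of_real ((norm (ip cj x (F i)))^2))"
    by (rule sum.cong) (simp_all add: mult_cj flip: ip_swap[of x])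
  finally show ?thesis by simp
qed

lemma frame_N: "is_frame cj N (F::nat \<Rightarrow> 'k^'n::finite) \<Longrightarrow> N \<ge> 1"
proof (rule ccontr)
  assume f: "is_frame cj N F" and "\<not> N \<ge> 1"
  then have N: "N = 0" by simp
  obtain A where A: "A > 0" "\<forall>f::'k^'n. A * (norm f)^2 \<le> (\<Sum>i=1..N. (norm (ip cj f (F i)))^2)"
    using f unfolding is_frame_def by blast
  have "A * (norm (axis undefined (1::'k) :: 'k^'n))^2 \<le> 0" using A(2) N by simp
  moreover have "norm (axis undefined (1::'k) :: 'k^'n) > 0" by (simp add: axis_eq_0_iff)
  ultimately show False using A(1) by (simp add: mult_le_0_iff)
qed

lemma S_inj:
  assumes f: "is_frame cj N F"
  shows "inj (frame_op cj N F)"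
proof -
  obtain A where A: "A > 0" "\<forall>f. A * (norm f)^2 \<le> (\<Sum>i=1..N. (norm (ip cj f (F i)))^2)"
    using f unfolding is_frame_def by blast
  have z: "x = 0" if "frame_op cj N F x = 0" for x
  proof -
    have "of_real (\<Sum>i=1..N. (norm (ip cj x (F i)))^2) = (0::'k)"
      using S_form[of N F x] that by simp
    then have "(\<Sum>i=1..N. (norm (ip cj x (F i)))^2) = 0" by (simp only: of_real_eq_0_iff)
    then have "A * (norm x)^2 \<le> 0" using A(2) by metis
    then show ?thesis using A(1) by (simp add: mult_le_0_iff)
  qed
  show ?thesis
    by (rule injI) (metis z klinear_diff[OF S_kl] right_minus_eq)
qed

definition Sinv where "Sinv N F = inv (frame_op cj N F)"

lemma S_bij:
  assumes f: "is_frame cj N (F::nat \<Rightarrow> 'k^'n::finite)"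
  shows "frame_op cj N F (Sinv N F x) = x" "Sinv N F (frame_op cj N F x) = x"
proof -
  have i: "inj (frame_op cj N F)" by (rule S_inj[OF f])
  have s: "surj (frame_op cj N F)"
    by (rule vec.linear_inj_imp_surj[OF klinear_vlinear[OF S_kl] i])
  show "frame_op cj N F (Sinv N F x) = x" unfolding Sinv_def by (rule surj_f_inv_f[OF s])
  show "Sinv N F (frame_op cj N F x) = x" unfolding Sinv_def by (rule inv_f_f[OF i])
qed

lemma Sinv_pos:
  assumes f: "is_frame cj N (F::nat \<Rightarrow> 'k^'n::finite)"
  shows "positive_op cj (Sinv N F)"
proof -
  let ?S = "frame_op cj N F" and ?T = "Sinv N F"
  note b = S_bij[OF f]
  have Sk: "klinear ?S" by (rule S_kl)
  have injS: "inj ?S" by (rule S_inj[OF f])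
  have kl: "klinear ?T" unfolding klinear_def
  proof (intro conjI allI)
    fix x y show "?T (x + y) = ?T x + ?T y"
      by (rule injD[OF injS]) (simp add: b klinear_add[OF Sk])
  next
    fix c x show "?T (c *s x) = c *s ?T x"
      by (rule injD[OF injS]) (simp add: b klinear_smult[OF Sk])
  qed
  have sT: "ip cj (?T x) y = ip cj x (?T y)" for x y
  proof -
    have "ip cj (?T x) y = ip cj (?T x) (?S (?T y))" by (simp add: b)
    also have "\<dots> = ip cj (?S (?T x)) (?T y)" using S_sa[of N F] unfolding sa_def by metis
    also have "\<dots> = ip cj x (?T y)" by (simp add: b)
    finally show ?thesis .
  qed
  have fT: "\<exists>r\<ge>0. ip cj (?T x) x = of_real r" for x
  proof -
    have "ip cj (?T x) x = ip cj (?T x) (?S (?T x))" by (simp add: b)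
    also have "\<dots> = ip cj (?S (?T x)) (?T x)" using S_sa[of N F] unfolding sa_def by metis
    also have "\<dots> = of_real (\<Sum>i=1..N. (norm (ip cj (?T x) (F i)))^2)" by (rule S_form)
    finally show ?thesis by (intro exI[of _ "\<Sum>i=1..N. (norm (ip cj (?T x) (F i)))^2"]) (auto intro: sum_nonneg)
  qed
  show ?thesis unfolding positive_op_def using kl sT fT by blast
qed

lemma Sinv_sa: assumes "is_frame cj N F" shows "ip cj (Sinv N F x) y = ip cj x (Sinv N F y)"
  using pos_sa[OF Sinv_pos[OF assms]] unfolding sa_def by blast

lemma recon1:
  assumes f: "is_frame cj N F"
  shows "(\<Sum>i=1..N. ip cj x (F i) *s Sinv N F (F i)) = x"
proof -
  have "(\<Sum>i=1..N. ip cj x (F i) *s Sinv N F (F i)) = Sinv N F (frame_op cj N F x)"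
    unfolding frame_op_def
    by (simp add: klinear_sum[OF pos_kl[OF Sinv_pos[OF f]]] klinear_smult[OF pos_kl[OF Sinv_pos[OF f]]])
  then show ?thesis by (simp add: S_bij[OF f])
qed

lemma recon2:
  assumes f: "is_frame cj N F"
  shows "(\<Sum>i=1..N. ip cj x (Sinv N F (F i)) *s F i) = x"
proof -
  have "(\<Sum>i=1..N. ip cj x (Sinv N F (F i)) *s F i) = frame_op cj N F (Sinv N F x)"
    unfolding frame_op_def by (simp add: Sinv_sa[OF f])
  then show ?thesis by (simp add: S_bij[OF f])
qed

lemma recon_frame:
  fixes F G :: "nat \<Rightarrow> 'k^'n::finite"
  assumes r: "\<And>f. f = (\<Sum>i=1..N. ip cj f (G i) *s F i)"
  shows "is_frame cj N G"
proof -
  define C1 where "C1 = (\<Sum>i=1..N. norm (F i))"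
  define B where "B = (\<Sum>i=1..N. (norm (G i))^2) + 1"
  define A where "A = 1 / (C1^2 + 1)"
  have C1: "C1 \<ge> 0" unfolding C1_def by (auto intro: sum_nonneg)
  have up: "(\<Sum>i=1..N. (norm (ip cj f (G i)))^2) \<le> B * (norm f)^2" for f
  proof -
    have "(\<Sum>i=1..N. (norm (ip cj f (G i)))^2) \<le> (\<Sum>i=1..N. (norm f)^2 * (norm (G i))^2)"
    proof (rule sum_mono)
      fix i
      have "norm (ip cj f (G i)) \<le> norm f * norm (G i)" by (rule norm_ip)
      then have "(norm (ip cj f (G i)))^2 \<le> (norm f * norm (G i))^2"
        by (rule power_mono) simp
      then show "(norm (ip cj f (G i)))^2 \<le> (norm f)^2 * (norm (G i))^2"
        by (simp add: power_mult_distrib)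
    qed
    also have "\<dots> = (norm f)^2 * (\<Sum>i=1..N. (norm (G i))^2)" by (simp add: sum_distrib_left)
    also have "\<dots> \<le> B * (norm f)^2" by (simp add: B_def algebra_simps)
    finally show ?thesis .
  qed
  have low: "A * (norm f)^2 \<le> (\<Sum>i=1..N. (norm (ip cj f (G i)))^2)" for f
  proof -
    define X where "X = (\<Sum>i=1..N. (norm (ip cj f (G i)))^2)"
    have X0: "X \<ge> 0" unfolding X_def by (auto intro: sum_nonneg)
    have each: "norm (ip cj f (G i)) \<le> sqrt X" if "i \<in> {1..N}" for i
    proof -
      have "(norm (ip cj f (G i)))^2 \<le> X"
        unfolding X_def by (rule member_le_sum[OF that]) auto
      then show ?thesis by (simp add: real_le_rsqrt)
    qed
    have "(norm f)^2 = norm (ip cj f f)" by (simp only: ip_self norm_of_real) simp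
    also have "ip cj f f = (\<Sum>i=1..N. ip cj f (G i) * ip cj (F i) f)"
      by (subst (1) r) (simp add: ip_sum_left ip_scale_left)
    also have "norm \<dots> \<le> (\<Sum>i=1..N. norm (ip cj f (G i) * ip cj (F i) f))"
      by (rule norm_sum)
    also have "\<dots> \<le> (\<Sum>i=1..N. sqrt X * (norm (F i) * norm f))"
    proof (rule sum_mono)
      fix i assume i: "i \<in> {1..N}"
      show "norm (ip cj f (G i) * ip cj (F i) f) \<le> sqrt X * (norm (F i) * norm f)"
        unfolding norm_mult by (rule mult_mono[OF each[OF i] norm_ip]) (auto simp: X0)
    qed
    also have "\<dots> = sqrt X * C1 * norm f" by (simp add: C1_def sum_distrib_left sum_distrib_right mult_ac)
    finally have h: "(norm f)^2 \<le> sqrt X * C1 * norm f" .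
    have h2: "norm f \<le> sqrt X * C1"
    proof (cases "f = 0")
      case True then show ?thesis using C1 X0 by simp
    next
      case False
      then show ?thesis using h by (simp add: power2_eq_square)
    qed
    then have "(norm f)^2 \<le> (sqrt X * C1)^2" by (simp add: power_mono)
    also have "\<dots> = X * C1^2" using X0 by (simp add: power_mult_distrib)
    also have "\<dots> \<le> X * (C1^2 + 1)" using X0 by (simp add: mult_left_mono)
    finally have "(norm f)^2 \<le> X * (C1^2 + 1)" .
    moreover have "C1^2 + 1 > 0" by (simp add: add_nonneg_pos)
    ultimately have "(norm f)^2 / (C1^2 + 1) \<le> X" by (simp add: pos_divide_le_eq)
    then show ?thesis by (simp add: A_def X_def)
  qed
  have "A > 0" "B > 0" unfolding A_def B_def by (auto intro!: add_nonneg_pos sum_nonneg)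
  then show ?thesis unfolding is_frame_def using up low by blast
qed

end


context cjl begin

lemma r1_kl: "klinear (\<lambda>f. (of_real a * ip cj f (u::'k^'n::finite)) *s (g::'k^'n))"
  unfolding klinear_def
  by (simp add: ip_add_left ip_scale_left distrib_left vector_sadd_rdistrib vector_smult_assoc mult_ac)

lemma r1_onorm: "onorm (\<lambda>f. (of_real a * ip cj f (u::'k^'n::finite)) *s (g::'k^'n)) = \<bar>a\<bar> * norm u * norm g"
  (is "onorm ?E = _")
proof (rule antisym)
  show "onorm ?E \<le> \<bar>a\<bar> * norm u * norm g"
  proof (rule onorm_le)
    fix x
    have "norm (?E x) = \<bar>a\<bar> * norm (ip cj x u) * norm g" by (simp add: norm_smult_vec norm_mult)
    also have "\<dots> \<le> \<bar>a\<bar> * (norm x * norm u) * norm g"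
      by (intro mult_right_mono mult_left_mono norm_ip) auto
    finally show "norm (?E x) \<le> \<bar>a\<bar> * norm u * norm g * norm x" by (simp add: mult_ac)
  qed
next
  have kl: "klinear ?E" by (rule r1_kl)
  have bl: "bounded_linear ?E" by (rule klinear_bl[OF kl])
  show "\<bar>a\<bar> * norm u * norm g \<le> onorm ?E"
  proof (cases "u = 0")
    case True then show ?thesis using onorm_pos_le[OF bl] by simp
  next
    case False
    have "norm (?E u) \<le> onorm ?E * norm u" by (rule onorm[OF bl])
    moreover have "norm (?E u) = \<bar>a\<bar> * norm u * norm g * norm u"
      by (simp add: norm_smult_vec norm_mult ip_self power2_eq_square)
    ultimately have "(\<bar>a\<bar> * norm u * norm g) * norm u \<le> onorm ?E * norm u" by simp
    then show ?thesis using False by (simp add: mult_le_cancel_right)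
  qed
qed

lemma r1_eig_bound:
  assumes "is_eigenvalue (\<lambda>f. (of_real a * ip cj f (u::'k^'n::finite)) *s (g::'k^'n)) c"
  shows "norm c \<le> \<bar>a\<bar> * norm (ip cj g u)"
proof -
  obtain v where v: "v \<noteq> 0" "(of_real a * ip cj v u) *s g = c *s v"
    using assms unfolding is_eigenvalue_def by blast
  define b where "b = of_real a * ip cj v u"
  define c0 where "c0 = of_real a * ip cj g u"
  have "ip cj (b *s g) u = ip cj (c *s v) u" using v(2) by (simp add: b_def)
  then have h: "b * ip cj g u = c * ip cj v u" by (simp only: ip_scale_left)
  have "b * c0 = of_real a * (b * ip cj g u)" unfolding c0_def by (rule mult.left_commute)
  also have "\<dots> = of_real a * (c * ip cj v u)" by (simp only: h)
  also have "\<dots> = b * c" unfolding b_def by (simp add: ac_simps)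
  finally have "b * c0 = b * c" .
  then have "b = 0 \<or> c = c0" by (metis mult_left_cancel)
  then show ?thesis
  proof
    assume "b = 0"
    have "c *s v = b *s g" using v(2) by (simp add: b_def)
    then have "c *s v = 0" using \<open>b = 0\<close> by simp
    then have "c = 0" using v(1) by (auto simp: vec_eq_iff)
    then show ?thesis by simp
  next
    assume "c = c0" then show ?thesis by (simp add: c0_def norm_mult)
  qed
qed

lemma r1_spec: "spec_radius (\<lambda>f. (of_real a * ip cj f (u::'k^'n::finite)) *s (g::'k^'n)) = \<bar>a\<bar> * norm (ip cj g u)"
  (is "spec_radius ?E = ?b")
proof -
  define c0 where "c0 = of_real a * ip cj g u"
  define v where "v = (if g = 0 then axis undefined 1 else g)"
  have "v \<noteq> 0" by (simp add: v_def axis_eq_0_iff)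
  moreover have "?E v = c0 *s v" by (cases "g = 0") (simp_all add: v_def c0_def)
  ultimately have e0: "is_eigenvalue ?E c0" unfolding is_eigenvalue_def by blast
  have nc0: "norm c0 = ?b" by (simp add: c0_def norm_mult)
  let ?S = "{norm c | c. is_eigenvalue ?E c}"
  have mem: "?b \<in> ?S" using e0 nc0 by force
  have ub: "\<forall>x\<in>?S. x \<le> ?b" using r1_eig_bound by blast
  have "Sup ?S = ?b" by (rule cSup_eq_maximum[OF mem]) (use ub in blast)
  then show ?thesis unfolding spec_radius_def Let_def using mem by auto
qed

definition vl :: "(nat \<Rightarrow> real) \<Rightarrow> (nat \<Rightarrow> 'k^'n::finite) \<Rightarrow> (nat \<Rightarrow> 'k^'n) \<Rightarrow> nat \<Rightarrow> real" where
  "vl q F G i = (\<bar>q i\<bar> * norm (F i) * norm (G i) + \<bar>q i\<bar> * norm (ip cj (G i) (F i))) / 2"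

lemma A1_vl: "A1 cj N p F (G::nat \<Rightarrow> 'k^'n::finite) = Max (vl (weight_num N CARD('n) p) F G ` {1..N})"
proof -
  have eq: "(\<lambda>i. (onorm (error_op cj (weight_num N CARD('n) p) F G {i})
        + spec_radius (error_op cj (weight_num N CARD('n) p) F G {i})) / 2) = vl (weight_num N CARD('n) p) F G"
    by (simp add: fun_eq_iff error_op_def r1_onorm r1_spec vl_def)
  show ?thesis unfolding A1_def by (simp only: eq)
qed

end


lemma smult_sum_left: "(\<Sum>i\<in>A. (a i :: 'k::field) *s w) = (sum a A) *s (w::'k^'n)"
  by (induction A rule: infinite_finite_induct) (auto simp: vector_sadd_rdistrib)

lemma smult_axis_eq0: "(x::'k::field) *s axis i 1 = 0 \<Longrightarrow> x = 0"
  by (metis axis_nth mult.right_neutral vector_smult_component zero_index)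

context cjl begin

lemma lin_indep_card:
  assumes fin: "finite I" and li: "lin_indep_fam I (F::nat \<Rightarrow> 'k^'n::finite)"
  shows "card I \<le> CARD('n)"
proof -
  have inj: "inj_on F I"
  proof (rule inj_onI, rule ccontr)
    fix a b assume ab: "a \<in> I" "b \<in> I" "F a = F b" "a \<noteq> b"
    define c where "c j = (if j = a then 1 else if j = b then -1 else (0::'k))" for j
    have "(\<Sum>j\<in>I. c j *s F j) = (\<Sum>j\<in>I. (if j = a then F a else 0) - (if j = b then F b else 0))"
      by (rule sum.cong) (auto simp: c_def ab)
    also have "\<dots> = F a - F b" using ab fin by (simp add: sum_subtractf)
    also have "\<dots> = 0" using ab by simp
    finally have "c a = 0" using li ab unfolding lin_indep_fam_def by blast
    then show False by (simp add: c_def)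
  qed
  have "vec.independent (F ` I)"
    unfolding vec.independent_explicit
  proof (intro conjI allI impI ballI)
    show "finite (F ` I)" using fin by simp
  next
    fix c v assume s: "(\<Sum>v\<in>F ` I. c v *s v) = 0" and v: "v \<in> F ` I"
    have "(\<Sum>j\<in>I. c (F j) *s F j) = 0" using s by (simp add: sum.reindex[OF inj])
    then have "\<forall>j\<in>I. c (F j) = 0"
      using li[unfolded lin_indep_fam_def, rule_format, of "\<lambda>j. c (F j)"] by blast
    then show "c v = 0" using v by blast
  qed
  then have "card (F ` I) \<le> vec.dim (F ` I)" using vec.independent_bound_general by blast
  also have "\<dots> \<le> vec.dim (UNIV :: ('k^'n) set)" by (rule vec.dim_subset) simp
  also have "\<dots> = CARD('n)" by (simp add: card_cart_basis)
  finally show ?thesis using card_image[OF inj] by simp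
qed

lemma split_zero:
  assumes int: "kspan_fam L1 F \<inter> kspan_fam L2 F = {0}"
    and s: "(\<Sum>j\<in>L1. a j *s F j) + (\<Sum>j\<in>L2. b j *s F j) = 0"
  shows "(\<Sum>j\<in>L1. a j *s F j) = 0" "(\<Sum>j\<in>L2. b j *s F j) = 0"
proof -
  have m1: "(\<Sum>j\<in>L1. a j *s F j) \<in> kspan_fam L1 F" unfolding kspan_fam_def by blast
  have "(\<Sum>j\<in>L1. a j *s F j) = - (\<Sum>j\<in>L2. b j *s F j)" using s by (simp add: eq_neg_iff_add_eq_0)
  also have "\<dots> = (\<Sum>j\<in>L2. (- b j) *s F j)" by (simp add: sum_negf)
  finally have "(\<Sum>j\<in>L1. a j *s F j) \<in> kspan_fam L2 F"
    unfolding kspan_fam_def by (intro CollectI exI[of _ "\<lambda>j. - b j"])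
  with m1 int show z: "(\<Sum>j\<in>L1. a j *s F j) = 0" by blast
  with s show "(\<Sum>j\<in>L2. b j *s F j) = 0" by simp
qed

lemma wnum_nonneg:
  assumes pr: "prob_seq N p" and i: "i \<in> {1..N}"
  shows "weight_num N n p i \<ge> 0"
proof -
  have s: "(\<Sum>j=1..N. p j) = 1" and pi: "p i \<le> 1" using pr i by (auto simp: prob_seq_def)
  have N: "real N - 1 \<ge> 0" using i by auto
  show ?thesis unfolding weight_num_def s using pi N by (auto intro!: mult_nonneg_nonneg divide_nonneg_nonneg)
qed

lemma dual_Cd:
  assumes fr: "is_frame cj N F"
  shows "is_dual cj N F (\<lambda>i. Sinv N F (F i))"
proof -
  have r2: "\<And>f. f = (\<Sum>i=1..N. ip cj f (Sinv N F (F i)) *s F i)" using recon2[OF fr] by simp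
  show ?thesis unfolding is_dual_def
    using recon_frame[OF r2] r2 recon1[OF fr] by simp
qed

lemma agree:
  fixes F :: "nat \<Rightarrow> 'k^'n::finite"
  assumes fr: "is_frame cj N F" and d: "is_dual cj N F G"
    and L1: "L1 \<subseteq> {1..N}"
    and int: "kspan_fam L1 F \<inter> kspan_fam ({1..N} - L1) F = {0}"
    and li: "lin_indep_fam L1 F" and i: "i \<in> L1"
  shows "G i = Sinv N F (F i)"
proof -
  define u where "u j = G j - Sinv N F (F j)" for j
  have z: "(\<Sum>j=1..N. ip cj h (u j) *s F j) = 0" for h
  proof -
    have e1: "(\<Sum>j=1..N. ip cj h (G j) *s F j) = h" using d unfolding is_dual_def by metis
    have e2: "(\<Sum>j=1..N. ip cj h (Sinv N F (F j)) *s F j) = h" by (rule recon2[OF fr])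
    have "(\<Sum>j=1..N. ip cj h (G j) *s F j) - (\<Sum>j=1..N. ip cj h (Sinv N F (F j)) *s F j) = 0"
      by (simp only: e1 e2 diff_self)
    then show ?thesis
      by (simp add: u_def ip_diff_right vector_sub_rdistrib sum_subtractf)
  qed
  have "ip cj h (u j) = 0" if j: "j \<in> L1" for h j
  proof -
    have "(\<Sum>j=1..N. ip cj h (u j) *s F j) =
       (\<Sum>j\<in>L1. ip cj h (u j) *s F j) + (\<Sum>j\<in>{1..N} - L1. ip cj h (u j) *s F j)"
      using sum.subset_diff[OF L1, of "\<lambda>j. ip cj h (u j) *s F j"] by (simp add: add.commute)
    then have "(\<Sum>j\<in>L1. ip cj h (u j) *s F j) + (\<Sum>j\<in>{1..N} - L1. ip cj h (u j) *s F j) = 0"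
      using z[of h] by simp
    then have "(\<Sum>j\<in>L1. ip cj h (u j) *s F j) = 0" by (rule split_zero(1)[OF int])
    then show ?thesis using li[unfolded lin_indep_fam_def, rule_format, of "\<lambda>j. ip cj h (u j)"] j by blast
  qed
  then have "ip cj (u i) (u i) = 0" using i by blast
  then show ?thesis by (simp add: ip_eq_zero_iff u_def)
qed


lemma main:
  fixes F :: "nat \<Rightarrow> 'k^'n::finite" and p :: "nat \<Rightarrow> real" and N :: nat
  assumes fr: "is_frame cj N F" and pr: "prob_seq N p"
    and int: "kspan_fam (Lambda1 cj N p F) F \<inter> kspan_fam ({1..N} - Lambda1 cj N p F) F = {0}"
    and li: "lin_indep_fam (Lambda1 cj N p F) F"
  shows "canonical_dual cj N F \<in> pasod1 cj N p F \<and>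
     (N > CARD('n) \<longrightarrow> (\<exists>G\<in>pasod1 cj N p F. \<exists>i\<in>{1..N}. G i \<noteq> canonical_dual cj N F i))"
proof -
  define q where "q = weight_num N CARD('n) p"
  define T where "T = Sinv N F"
  define Cd where "Cd = canonical_dual cj N F"
  define L1 where "L1 = Lambda1 cj N p F"
  define l where "l = lmax cj N p F"
  have Cd_eq: "Cd = (\<lambda>i. T (F i))" by (simp add: Cd_def T_def canonical_dual_def Sinv_def fun_eq_iff)
  have N1: "N \<ge> 1" by (rule frame_N[OF fr])
  have fin: "finite {1..N}" and ne: "{1..N} \<noteq> {}" using N1 by auto
  have q0: "q i \<ge> 0" if "i \<in> {1..N}" for i unfolding q_def by (rule wnum_nonneg[OF pr that])
  have Tpos: "positive_op cj T" unfolding T_def by (rule Sinv_pos[OF fr])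
  have crit_eq: "crit cj N p F i = 2 * vl q F Cd i" if i: "i \<in> {1..N}" for i
  proof -
    have ns: "norm (ip cj (T (F i)) (F i)) = (norm (op_sqrt cj T (F i)))^2"
      using norm_sqrt[OF Tpos, of "F i"] by (metis norm_of_real power2_abs abs_power2)
    show ?thesis
      unfolding crit_def Let_def vl_def Cd_eq
      using q0[OF i] ns by (simp add: q_def T_def Sinv_def algebra_simps)
  qed
  have L1sub: "L1 \<subseteq> {1..N}" by (auto simp: L1_def Lambda1_def)
  have crit_le: "crit cj N p F i \<le> l" if "i \<in> {1..N}" for i
    unfolding l_def lmax_def using fin that by simp
  have "l \<in> crit cj N p F ` {1..N}" unfolding l_def lmax_def using fin ne by (intro Max_in) auto
  then obtain i0 where i0: "i0 \<in> {1..N}" "crit cj N p F i0 = l" by auto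
  have i0L: "i0 \<in> L1" using i0 by (simp add: L1_def Lambda1_def l_def)
  have dCd: "is_dual cj N F Cd" unfolding Cd_eq T_def by (rule dual_Cd[OF fr])
  have "\<forall>i\<in>{1..N}. vl q F Cd i \<le> l / 2" using crit_le crit_eq by fastforce
  then have A1Cd: "A1 cj N p F Cd \<le> l / 2"
    unfolding A1_vl q_def[symmetric] using fin ne by (subst Max_le_iff) auto
  have lowA: "l / 2 \<le> A1 cj N p F G" if d: "is_dual cj N F G" for G
  proof -
    have "G i0 = Cd i0"
      using agree[OF fr d L1sub int[folded L1_def] li[folded L1_def] i0L] by (simp add: Cd_eq T_def)
    then have "vl q F G i0 = vl q F Cd i0" by (simp add: vl_def)
    also have "\<dots> = l / 2" using crit_eq[OF i0(1)] i0(2) by simp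
    finally have "l / 2 = vl q F G i0" by simp
    also have "\<dots> \<le> Max (vl q F G ` {1..N})" using fin i0(1) by simp
    finally show ?thesis unfolding A1_vl q_def .
  qed
  have part1: "Cd \<in> pasod1 cj N p F"
    unfolding pasod1_def using dCd A1Cd lowA by (blast intro: order_trans)
  have part2: "\<exists>G\<in>pasod1 cj N p F. \<exists>i\<in>{1..N}. G i \<noteq> Cd i" if big: "N > CARD('n)"
  proof -
    define L2 where "L2 = {1..N} - L1"
    have int': "kspan_fam L1 F \<inter> kspan_fam L2 F = {0}" using int by (simp add: L1_def L2_def)
    have li': "lin_indep_fam L1 F" using li by (simp add: L1_def)
    have splitN: "(\<Sum>j=1..N. f j) = (\<Sum>j\<in>L1. f j) + (\<Sum>j\<in>L2. f j)" for f :: "nat \<Rightarrow> 'k^'n"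
      using sum.subset_diff[OF L1sub fin, of f] by (simp add: L2_def add.commute)
    have "\<exists>c. (\<Sum>j\<in>L2. c j *s F j) = 0 \<and> (\<exists>j\<in>L2. c j \<noteq> 0)"
    proof (rule ccontr)
      assume "\<not> ?thesis"
      then have li2: "lin_indep_fam L2 F" unfolding lin_indep_fam_def by blast
      have "lin_indep_fam {1..N} F" unfolding lin_indep_fam_def
      proof (intro allI impI ballI)
        fix c j assume s: "(\<Sum>i=1..N. c i *s F i) = 0" and j: "j \<in> {1..N}"
        have s': "(\<Sum>i\<in>L1. c i *s F i) + (\<Sum>i\<in>L2. c i *s F i) = 0" using s splitN by metis
        show "c j = 0"
        proof (cases "j \<in> L1")
          case True
          then show ?thesis using split_zero(1)[OF int' s'] li' unfolding lin_indep_fam_def by blast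
        next
          case False
          then have "j \<in> L2" using j by (simp add: L2_def)
          then show ?thesis using split_zero(2)[OF int' s'] li2 unfolding lin_indep_fam_def by blast
        qed
      qed
      then have "card {1..N} \<le> CARD('n)" by (rule lin_indep_card[OF fin])
      then show False using big by simp
    qed
    then obtain c j0 where c: "(\<Sum>j\<in>L2. c j *s F j) = 0" and j0: "j0 \<in> L2" "c j0 \<noteq> 0" by blast
    define c' where "c' j = (if j \<in> L2 then c j else 0)" for j
    have sumc: "(\<Sum>j=1..N. c' j *s F j) = 0"
    proof -
      have "(\<Sum>j=1..N. c' j *s F j) = (\<Sum>j=1..N. if j \<in> L2 then c j *s F j else 0)"
        by (rule sum.cong) (simp_all add: c'_def)
      also have "\<dots> = (\<Sum>j\<in>{1..N} \<inter> L2. c j *s F j)" by (rule sum.inter_restrict[OF fin, symmetric])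
      also have "{1..N} \<inter> L2 = L2" by (auto simp: L2_def)
      finally show ?thesis using c by simp
    qed
    define w where "w = (axis undefined 1 :: 'k^'n)"
    have w0: "w \<noteq> 0" by (simp add: w_def axis_eq_0_iff)
    define d where "d j = cj (c' j) *s w" for j
    define K where "K j = q j * (norm (F j) * norm (d j) + norm (ip cj (d j) (F j))) / 2" for j
    have K0: "K j \<ge> 0" if "j \<in> {1..N}" for j using q0[OF that] by (simp add: K_def)
    define gap where "gap i = l / 2 - vl q F Cd i" for i
    have gap0: "gap i > 0" if i: "i \<in> L2" for i
    proof -
      have i1: "i \<in> {1..N}" "i \<notin> L1" using i by (auto simp: L2_def)
      then have "crit cj N p F i \<noteq> l" by (simp add: L1_def Lambda1_def l_def)
      then have "crit cj N p F i < l" using crit_le[OF i1(1)] by simp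
      then show ?thesis using crit_eq[OF i1(1)] by (simp add: gap_def)
    qed
    have finL2: "finite L2" by (simp add: L2_def)
    define \<delta> where "\<delta> = Min (gap ` L2)"
    have dpos: "\<delta> > 0" unfolding \<delta>_def using finL2 j0 gap0 by (subst Min_gr_iff) auto
    have dle: "\<delta> \<le> gap i" if "i \<in> L2" for i unfolding \<delta>_def using finL2 that by simp
    define SK where "SK = (\<Sum>j=1..N. K j)"
    have SK0: "SK \<ge> 0" unfolding SK_def using K0 by (auto intro: sum_nonneg)
    define \<epsilon> where "\<epsilon> = \<delta> / (1 + SK)"
    have epos: "\<epsilon> > 0" unfolding \<epsilon>_def using dpos SK0 by simp
    have eK: "\<epsilon> * K i \<le> \<delta>" if i: "i \<in> {1..N}" for i
    proof -
      have "K i \<le> SK" unfolding SK_def by (rule member_le_sum[OF i]) (use K0 in auto)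
      then have "K i \<le> 1 + SK" by simp
      then have "\<delta> * K i \<le> \<delta> * (1 + SK)" using dpos by (simp add: mult_left_mono)
      then show ?thesis using SK0 by (simp add: \<epsilon>_def field_simps)
    qed
    define G' where "G' j = Cd j + of_real \<epsilon> *s d j" for j
    have ipd: "ip cj f (d j) = c' j * ip cj f w" for f j
      by (simp add: d_def ip_scale_right cj_cj)
    have r1: "(\<Sum>j=1..N. ip cj f (F j) *s G' j) = f" for f
    proof -
      have "(\<Sum>j=1..N. ip cj f (F j) *s G' j) = (\<Sum>j=1..N. ip cj f (F j) *s Cd j)
          + (\<Sum>j=1..N. (of_real \<epsilon> * ip cj f (c' j *s F j)) *s w)"
        by (simp add: G'_def d_def vector_add_ldistrib sum.distrib vector_smult_assoc ip_scale_right mult_ac)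
      also have "(\<Sum>j=1..N. ip cj f (F j) *s Cd j) = f" unfolding Cd_eq T_def by (rule recon1[OF fr])
      also have "(\<Sum>j=1..N. (of_real \<epsilon> * ip cj f (c' j *s F j)) *s w)
          = (of_real \<epsilon> * ip cj f (\<Sum>j=1..N. c' j *s F j)) *s w"
        by (simp only: smult_sum_left sum_distrib_left[symmetric] ip_sum_right[symmetric])
      also have "\<dots> = 0" unfolding sumc by simp
      finally show ?thesis by simp
    qed
    have r2: "(\<Sum>j=1..N. ip cj f (G' j) *s F j) = f" for f
    proof -
      have "(\<Sum>j=1..N. ip cj f (G' j) *s F j) = (\<Sum>j=1..N. ip cj f (Cd j) *s F j)
          + (of_real \<epsilon> * ip cj f w) *s (\<Sum>j=1..N. c' j *s F j)"
        by (simp add: G'_def ip_add_right ip_scale_right ipd cj_of_real vector_sadd_rdistrib sum.distrib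
            smult_sum vector_smult_assoc mult_ac)
      also have "(\<Sum>j=1..N. ip cj f (Cd j) *s F j) = f" unfolding Cd_eq T_def by (rule recon2[OF fr])
      finally show ?thesis unfolding sumc by simp
    qed
    have dG': "is_dual cj N F G'"
    proof -
      have "\<And>f. f = (\<Sum>j=1..N. ip cj f (G' j) *s F j)" using r2 by simp
      then have "is_frame cj N G'" by (rule recon_frame)
      then show ?thesis unfolding is_dual_def using r1 r2 by simp
    qed
    have vlG': "vl q F G' i \<le> l / 2" if i: "i \<in> {1..N}" for i
    proof (cases "i \<in> L1")
      case True
      then have "c' i = 0" by (simp add: c'_def L2_def)
      then have "G' i = Cd i" by (simp add: G'_def d_def)
      then have "vl q F G' i = vl q F Cd i" by (simp add: vl_def)
      then show ?thesis using crit_eq[OF i] crit_le[OF i] by simp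
    next
      case False
      then have iL2: "i \<in> L2" using i by (simp add: L2_def)
      have n1: "norm (G' i) \<le> norm (Cd i) + \<epsilon> * norm (d i)"
        using norm_triangle_ineq[of "Cd i" "of_real \<epsilon> *s d i"] epos
        by (simp add: G'_def norm_smult_vec)
      have n2: "norm (ip cj (G' i) (F i)) \<le> norm (ip cj (Cd i) (F i)) + \<epsilon> * norm (ip cj (d i) (F i))"
        using norm_triangle_ineq[of "ip cj (Cd i) (F i)" "of_real \<epsilon> * ip cj (d i) (F i)"] epos
        by (simp add: G'_def ip_add_left ip_scale_left norm_mult)
      have qi: "q i \<ge> 0" by (rule q0[OF i])
      have "vl q F G' i \<le> (q i * norm (F i) * (norm (Cd i) + \<epsilon> * norm (d i))
           + q i * (norm (ip cj (Cd i) (F i)) + \<epsilon> * norm (ip cj (d i) (F i)))) / 2"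
      proof -
        have a1: "q i * norm (F i) * norm (G' i) \<le> q i * norm (F i) * (norm (Cd i) + \<epsilon> * norm (d i))"
          by (rule mult_left_mono[OF n1]) (simp add: qi)
        have a2: "q i * norm (ip cj (G' i) (F i)) \<le> q i * (norm (ip cj (Cd i) (F i)) + \<epsilon> * norm (ip cj (d i) (F i)))"
          by (rule mult_left_mono[OF n2 qi])
        show ?thesis unfolding vl_def using a1 a2 qi by simp
      qed
      also have "\<dots> = vl q F Cd i + \<epsilon> * K i"
        using qi by (simp add: vl_def K_def field_simps)
      also have "\<dots> \<le> vl q F Cd i + \<delta>" using eK[OF i] by simp
      also have "\<dots> \<le> l / 2" using dle[OF iL2] by (simp add: gap_def)
      finally show ?thesis .
    qed
    have "A1 cj N p F G' \<le> l / 2"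
      unfolding A1_vl q_def[symmetric] using fin ne vlG' by (subst Max_le_iff) auto
    then have inP: "G' \<in> pasod1 cj N p F"
      unfolding pasod1_def using dG' lowA by (blast intro: order_trans)
    have "G' j0 \<noteq> Cd j0"
    proof
      assume "G' j0 = Cd j0"
      then have "of_real \<epsilon> *s d j0 = 0" by (simp add: G'_def)
      then have "(of_real \<epsilon> * cj (c j0)) *s w = 0" using j0 by (simp add: d_def c'_def vector_smult_assoc)
      then have "of_real \<epsilon> * cj (c j0) = 0" unfolding w_def by (rule smult_axis_eq0)
      moreover have "cj (c j0) \<noteq> 0" using j0(2) cj_cj[of "c j0"] by auto
      ultimately show False using epos by simp
    qed
    moreover have "j0 \<in> {1..N}" using j0 by (simp add: L2_def)
    ultimately show ?thesis using inP by blast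
  qed
  show ?thesis using part1 part2 by (simp add: Cd_def)
qed

end

lemma cjl_complex: "cjl cnj Re"
proof
  fix a :: complex
  assume "cnj a = a"
  then have "Im a = 0" by (simp add: complex_eq_iff)
  then show "a = complex_of_real (Re a)" by (simp add: complex_eq_iff)
qed (simp_all add: inner_complex_def flip: complex_norm_square)

lemma cjl_real: "cjl (id :: real \<Rightarrow> real) id"
  by unfold_locales (simp_all add: power2_eq_square)

theorem theorem3p9:
  shows
  "(\<forall>(F :: nat \<Rightarrow> complex^'n) (p :: nat \<Rightarrow> real) (N :: nat).
      is_frame cnj N F \<and> prob_seq N p \<and>
      kspan_fam (Lambda1 cnj N p F) F \<inter> kspan_fam ({1..N} - Lambda1 cnj N p F) F = {0} \<and>
      lin_indep_fam (Lambda1 cnj N p F) F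
      \<longrightarrow> canonical_dual cnj N F \<in> pasod1 cnj N p F \<and>
          (N > CARD('n) \<longrightarrow> (\<exists>G\<in>pasod1 cnj N p F. \<exists>i\<in>{1..N}. G i \<noteq> canonical_dual cnj N F i)))
   \<and>
   (\<forall>(F :: nat \<Rightarrow> real^'m) (p :: nat \<Rightarrow> real) (N :: nat).
      is_frame id N F \<and> prob_seq N p \<and>
      kspan_fam (Lambda1 id N p F) F \<inter> kspan_fam ({1..N} - Lambda1 id N p F) F = {0} \<and>
      lin_indep_fam (Lambda1 id N p F) F
      \<longrightarrow> canonical_dual id N F \<in> pasod1 id N p F \<and>
          (N > CARD('m) \<longrightarrow> (\<exists>G\<in>pasod1 id N p F. \<exists>i\<in>{1..N}. G i \<noteq> canonical_dual id N F i)))"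
proof (rule conjI; intro allI impI)
  fix F :: "nat \<Rightarrow> complex^'n" and p :: "nat \<Rightarrow> real" and N :: nat
  assume "is_frame cnj N F \<and> prob_seq N p \<and>
      kspan_fam (Lambda1 cnj N p F) F \<inter> kspan_fam ({1..N} - Lambda1 cnj N p F) F = {0} \<and>
      lin_indep_fam (Lambda1 cnj N p F) F"
  then show "canonical_dual cnj N F \<in> pasod1 cnj N p F \<and>
          (N > CARD('n) \<longrightarrow> (\<exists>G\<in>pasod1 cnj N p F. \<exists>i\<in>{1..N}. G i \<noteq> canonical_dual cnj N F i))"
    using cjl.main[OF cjl_complex, of N F p] by blast
next
  fix F :: "nat \<Rightarrow> real^'m" and p :: "nat \<Rightarrow> real" and N :: nat
  assume "is_frame id N F \<and> prob_seq N p \<and>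
      kspan_fam (Lambda1 id N p F) F \<inter> kspan_fam ({1..N} - Lambda1 id N p F) F = {0} \<and>
      lin_indep_fam (Lambda1 id N p F) F"
  then show "canonical_dual id N F \<in> pasod1 id N p F \<and>
          (N > CARD('m) \<longrightarrow> (\<exists>G\<in>pasod1 id N p F. \<exists>i\<in>{1..N}. G i \<noteq> canonical_dual id N F i))"
    using cjl.main[OF cjl_real, of N F p] by blast
qed

end
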